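(* Let $I$ be a nonzero ideal of $\mathbb{Z}[\sqrt{2}]$. Then there exists a generator $\alpha'$ of $I$ (i.e. $I=(\alpha')$) which is a shortest nonzero vector of $I$ under the canonical embedding, i.e. $\|\Sigma_{\mathbb{Q}(\sqrt2)}(\alpha')\|\le\|\Sigma_{\mathbb{Q}(\sqrt2)}(\gamma)\|$ for every nonzero $\gamma\in I$.
   Context: The canonical embedding of $\mathbb{Q}(\sqrt2)$ is $\Sigma_{\mathbb{Q}(\sqrt2)}(x)=(x,\tau(x))$, where $\tau$ is the nontrivial automorphism ($\tau(\sqrt2)=-\sqrt2$), with $\|\Sigma_{\mathbb{Q}(\sqrt2)}(x)\|^2=x^2+\tau(x)^2$. *)

theory Defs
  imports Complex_Main
begin

text \<open>Elements of Z[sqrt 2] are represented as pairs (a, b) of integers, standing for a + b * sqrt 2.\<close>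

type_synonym zsqrt2 = "int \<times> int"

definition zs_add :: "zsqrt2 \<Rightarrow> zsqrt2 \<Rightarrow> zsqrt2" where
  "zs_add x y = (fst x + fst y, snd x + snd y)"

definition zs_mul :: "zsqrt2 \<Rightarrow> zsqrt2 \<Rightarrow> zsqrt2" where
  "zs_mul x y = (fst x * fst y + 2 * snd x * snd y, fst x * snd y + snd x * fst y)"

definition zs_zero :: zsqrt2 where "zs_zero = (0, 0)"

definition zs_val :: "zsqrt2 \<Rightarrow> real" where
  "zs_val x = of_int (fst x) + of_int (snd x) * sqrt 2"

definition zs_tau :: "zsqrt2 \<Rightarrow> real" where
  "zs_tau x = of_int (fst x) - of_int (snd x) * sqrt 2"

definition emb_norm :: "zsqrt2 \<Rightarrow> real" where
  "emb_norm x = sqrt ((zs_val x)\<^sup>2 + (zs_tau x)\<^sup>2)"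

definition zs_ideal :: "zsqrt2 set \<Rightarrow> bool" where
  "zs_ideal I \<longleftrightarrow> zs_zero \<in> I
     \<and> (\<forall>x\<in>I. \<forall>y\<in>I. zs_add x y \<in> I)
     \<and> (\<forall>r x. x \<in> I \<longrightarrow> zs_mul r x \<in> I)"

definition zs_principal :: "zsqrt2 \<Rightarrow> zsqrt2 set" where
  "zs_principal a = {zs_mul a r | r. True}"

end

theory Submission imports Defs begin
lemma sq2: "(a::int)^2 = 2*b^2 \<Longrightarrow> b = 0"
proof (induction "nat \<bar>b\<bar>" arbitrary: a b rule: less_induct)
  case less
  have "even (a^2)" using less.prems by simp
  then obtain a' where a': "a = 2*a'" by auto
  have h: "b^2 = 2*a'^2" using less.prems a' by (simp add: power_mult_distrib)
  show ?case
  proof (rule ccontr)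
    assume "b \<noteq> 0"
    have "a'^2 < b^2" using h \<open>b\<noteq>0\<close> by (smt (verit) zero_less_power2)
    hence "\<bar>a'\<bar> < \<bar>b\<bar>" using abs_less_iff power2_less_imp_less by (metis abs_ge_zero power2_abs)
    hence "nat \<bar>a'\<bar> < nat \<bar>b\<bar>" by simp
    from less.hyps[OF this h] have "a' = 0" .
    with h \<open>b\<noteq>0\<close> show False by simp
  qed
qed
lemma div_round: "(n::int) \<noteq> 0 \<Longrightarrow> \<exists>q. \<bar>2*(c - q*n)\<bar> \<le> \<bar>n\<bar>"
proof -
  assume n: "n \<noteq> 0"
  have pos: "\<exists>q. \<bar>2*(c - q*m)\<bar> \<le> m" if m: "m > 0" for m c :: int
  proof -
    define q where "q = (2*c + m) div (2*m)"
    have "0 \<le> (2*c+m) mod (2*m)" "(2*c+m) mod (2*m) < 2*m" using m by auto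
    moreover have "(2*c+m) mod (2*m) = 2*c + m - 2*m*q" unfolding q_def by (simp add: mod_div_mult_eq minus_div_mult_eq_mod[symmetric])
    ultimately show ?thesis by (intro exI[of _ q]) (auto simp: algebra_simps)
  qed
  show ?thesis
  proof (cases "n > 0")
    case True thus ?thesis using pos[of n c] by simp
  next
    case False
    then obtain q where "\<bar>2*(c - q*(-n))\<bar> \<le> -n" using pos[of "-n" c] n by auto
    thus ?thesis using False by (intro exI[of _ "-q"]) auto
  qed
qed
definition NN :: "zsqrt2 \<Rightarrow> int" where "NN x = (fst x)^2 - 2*(snd x)^2"
definition EE :: "zsqrt2 \<Rightarrow> int" where "EE x = 2*(fst x)^2 + 4*(snd x)^2"

lemma emb_EE: "emb_norm x = sqrt (of_int (EE x))"
  unfolding emb_norm_def EE_def zs_val_def zs_tau_def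
  by (simp add: power2_eq_square algebra_simps)

lemma NN_mul: "NN (zs_mul x y) = NN x * NN y"
  unfolding NN_def zs_mul_def by (simp add: power2_eq_square algebra_simps)

lemma NN_zero: "NN x = 0 \<longleftrightarrow> x = zs_zero"
proof
  assume "NN x = 0"
  hence "(fst x)^2 = 2*(snd x)^2" unfolding NN_def by simp
  moreover from sq2[OF this] have "snd x = 0" .
  ultimately show "x = zs_zero" unfolding zs_zero_def by (cases x) auto
qed (simp add: NN_def zs_zero_def)

lemma EE_ge: "EE x \<ge> 2 * \<bar>NN x\<bar>"
  unfolding EE_def NN_def by (simp add: abs_if)

lemma lin4: "4*U \<le> N \<Longrightarrow> 4*V \<le> N \<Longrightarrow> 0 \<le> (U::int) \<Longrightarrow> 0 \<le> (V::int) \<Longrightarrow> \<bar>2 * (U - 2 * V)\<bar> \<le> N"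
  unfolding abs_le_iff by arith

lemma mul_comm: "zs_mul x y = zs_mul y x"
  unfolding zs_mul_def by (simp add: algebra_simps)

lemma gen:
  assumes I: "zs_ideal I" and b: "\<beta> \<in> I" "\<beta> \<noteq> zs_zero"
    and min: "\<And>\<gamma>. \<gamma> \<in> I \<Longrightarrow> \<gamma> \<noteq> zs_zero \<Longrightarrow> \<bar>NN \<beta>\<bar> \<le> \<bar>NN \<gamma>\<bar>"
  shows "I = zs_principal \<beta>"
proof
  show "zs_principal \<beta> \<subseteq> I"
  proof
    fix x assume "x \<in> zs_principal \<beta>"
    then obtain r where "x = zs_mul r \<beta>" unfolding zs_principal_def by (auto simp: mul_comm)
    thus "x \<in> I" using I b unfolding zs_ideal_def by blast
  qed
next
  show "I \<subseteq> zs_principal \<beta>"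
  proof
    fix \<gamma> assume g: "\<gamma> \<in> I"
    obtain g1 g2 where gg: "\<gamma> = (g1, g2)" by fastforce
    obtain b1 b2 where bb: "\<beta> = (b1, b2)" by fastforce
    define n where "n = NN \<beta>"
    have n0: "n \<noteq> 0" using b NN_zero n_def by auto
    define c where "c = g1*b1 - 2*g2*b2"
    define d where "d = g2*b1 - g1*b2"
    obtain q1 where q1: "\<bar>2*(c - q1*n)\<bar> \<le> \<bar>n\<bar>" using div_round[OF n0] by blast
    obtain q2 where q2: "\<bar>2*(d - q2*n)\<bar> \<le> \<bar>n\<bar>" using div_round[OF n0] by blast
    define r where "r = zs_add \<gamma> (zs_mul (-q1, -q2) \<beta>)"
    have rI: "r \<in> I" using I g b unfolding r_def zs_ideal_def by blast
    define u where "u = c - q1*n"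
    define v where "v = d - q2*n"
    have key: "NN r * n = u^2 - 2*v^2"
      unfolding r_def n_def u_def v_def c_def d_def gg bb NN_def zs_add_def zs_mul_def
      by (simp add: power2_eq_square algebra_simps)
    have "(2*u)^2 \<le> n^2" using q1 unfolding u_def abs_le_square_iff[symmetric] by simp
    moreover have "(2*v)^2 \<le> n^2" using q2 unfolding v_def abs_le_square_iff[symmetric] by simp
    ultimately have "4*u^2 \<le> n^2" "4*v^2 \<le> n^2" by (simp_all add: power_mult_distrib)
    moreover have "0 \<le> u^2" "0 \<le> v^2" by simp_all
    ultimately have "\<bar>2*(u^2 - 2*v^2)\<bar> \<le> n^2" by (rule lin4)
    hence "2*\<bar>u^2 - 2*v^2\<bar> \<le> n^2" by (simp only: abs_mult abs_numeral)
    moreover have "\<bar>NN r\<bar> * \<bar>n\<bar> = \<bar>u^2-2*v^2\<bar>" using key by (metis abs_mult)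
    moreover have "n^2 = \<bar>n\<bar>*\<bar>n\<bar>" by (metis abs_mult_self_eq power2_eq_square)
    ultimately have "2*\<bar>NN r\<bar>*\<bar>n\<bar> \<le> \<bar>n\<bar>*\<bar>n\<bar>" by (simp add: mult.assoc)
    hence "2*\<bar>NN r\<bar> \<le> \<bar>n\<bar>" using n0 by (meson mult_right_le_imp_le zero_less_abs_iff)
    hence "\<bar>NN r\<bar> < \<bar>NN \<beta>\<bar>" using n0 n_def by simp
    hence "r = zs_zero" using min[OF rI] by fastforce
    hence "\<gamma> = zs_mul \<beta> (q1, q2)"
      unfolding r_def zs_zero_def zs_add_def zs_mul_def gg bb by (simp add: algebra_simps)
    thus "\<gamma> \<in> zs_principal \<beta>" unfolding zs_principal_def by blast
  qed
qed

lemma balanced: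
  fixes a b :: int
  assumes "EE (a,b) \<le> EE (a+2*b, a+b)" "EE (a,b) \<le> EE (-a+2*b, a-b)" "(a,b) \<noteq> zs_zero"
  shows "EE (a,b) < 4*\<bar>NN (a,b)\<bar>"
proof -
  have h1: "4*\<bar>a*b\<bar> \<le> a^2 + 2*b^2" using assms(1,2) unfolding EE_def
    by (simp add: power2_eq_square algebra_simps abs_if)
  have h2: "16*(a*b)^2 \<le> (a^2+2*b^2)^2"
  proof -
    have "\<bar>4*(a*b)\<bar> \<le> \<bar>a^2 + 2*b^2\<bar>" using h1 by (simp add: abs_mult)
    hence "(4*(a*b))^2 \<le> (a^2+2*b^2)^2" unfolding abs_le_square_iff .
    thus ?thesis by (simp add: power_mult_distrib)
  qed
  have pos: "a^2 + 2*b^2 > 0" using assms(3) unfolding zs_zero_def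
  proof -
    have "a \<noteq> 0 \<or> b \<noteq> 0" using assms(3) unfolding zs_zero_def by auto
    thus ?thesis by (auto simp: add_pos_nonneg add_nonneg_pos)
  qed
  have "(a^2+2*b^2)^2 < 4*(a^2-2*b^2)^2"
  proof (cases "a*b = 0")
    case True
    have "(a^2-2*b^2)^2 = (a^2+2*b^2)^2 - 8*(a*b)^2" by (simp add: power2_eq_square algebra_simps)
    hence "(a^2-2*b^2)^2 = (a^2+2*b^2)^2" using True by simp
    moreover have "(a^2+2*b^2)^2 > 0" using pos by simp
    ultimately show ?thesis by simp
  next
    case False
    hence "(a*b)^2 > 0" by simp
    thus ?thesis using h2 by (simp add: power2_eq_square algebra_simps)
  qed
  hence "a^2+2*b^2 < 2*\<bar>a^2-2*b^2\<bar>"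
  proof -
    have eq: "(2*(a^2-2*b^2))^2 = 4*(a^2-2*b^2)^2" by (simp only: power_mult_distrib) simp
    have "\<not> \<bar>2*(a^2-2*b^2)\<bar> \<le> \<bar>a^2+2*b^2\<bar>" unfolding abs_le_square_iff using \<open>(a^2+2*b^2)^2 < 4*(a^2-2*b^2)^2\<close> eq
      by linarith
    moreover have "\<bar>2*a^2-4*b^2\<bar> = 2*\<bar>a^2-2*b^2\<bar>" by (simp add: abs_if)
    ultimately show ?thesis using pos by (simp add: abs_mult)
  qed
  thus ?thesis unfolding EE_def NN_def by simp
qed
theorem theorem6:
  fixes I :: "zsqrt2 set"
  assumes "zs_ideal I" and "I \<noteq> {zs_zero}"
  shows "\<exists>\<alpha>\<in>I. I = zs_principal \<alpha> \<and> \<alpha> \<noteq> zs_zero \<and>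
           (\<forall>\<gamma>\<in>I. \<gamma> \<noteq> zs_zero \<longrightarrow> emb_norm \<alpha> \<le> emb_norm \<gamma>)"
proof -
  have z: "zs_zero \<in> I" using assms(1) unfolding zs_ideal_def by blast
  then obtain x0 where x0: "x0 \<in> I" "x0 \<noteq> zs_zero" using assms(2) by blast
  define P1 where "P1 x \<longleftrightarrow> x \<in> I \<and> x \<noteq> zs_zero" for x
  define \<beta> where "\<beta> = arg_min (\<lambda>x. nat \<bar>NN x\<bar>) P1"
  have "P1 x0" using x0 P1_def by simp
  from arg_min_nat_lemma[of P1, OF this, of "\<lambda>x. nat \<bar>NN x\<bar>"]
  have b1: "P1 \<beta>" and b0: "\<And>y. P1 y \<Longrightarrow> nat \<bar>NN \<beta>\<bar> \<le> nat \<bar>NN y\<bar>"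
    unfolding \<beta>_def by blast+
  have b2: "\<And>y. P1 y \<Longrightarrow> \<bar>NN \<beta>\<bar> \<le> \<bar>NN y\<bar>" using b0 by (meson abs_ge_zero nat_le_eq_zle)
  define P2 where "P2 x \<longleftrightarrow> P1 x \<and> \<bar>NN x\<bar> = \<bar>NN \<beta>\<bar>" for x
  define \<delta> where "\<delta> = arg_min (\<lambda>x. nat (EE x)) P2"
  have "P2 \<beta>" using b1 P2_def by simp
  from arg_min_nat_lemma[of P2, OF this, of "\<lambda>x. nat (EE x)"]
  have d1: "P2 \<delta>" and d0: "\<And>y. P2 y \<Longrightarrow> nat (EE \<delta>) \<le> nat (EE y)"
    unfolding \<delta>_def by blast+
  have EE0: "\<And>x. 0 \<le> EE x" unfolding EE_def by simp
  have d2: "\<And>y. P2 y \<Longrightarrow> EE \<delta> \<le> EE y" using d0 EE0 by (meson nat_le_eq_zle)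
  have dI: "\<delta> \<in> I" "\<delta> \<noteq> zs_zero" using d1 unfolding P2_def P1_def by auto
  have dmin: "\<And>\<gamma>. \<gamma> \<in> I \<Longrightarrow> \<gamma> \<noteq> zs_zero \<Longrightarrow> \<bar>NN \<delta>\<bar> \<le> \<bar>NN \<gamma>\<bar>"
    using d1 b2 unfolding P2_def P1_def by auto
  have gen\<delta>: "I = zs_principal \<delta>" by (rule gen[OF assms(1) dI dmin])
  obtain a b where ab: "\<delta> = (a, b)" by fastforce
  have P2u: "P2 (zs_mul u \<delta>)" if "NN u = 1 \<or> NN u = -1" for u
  proof -
    have "zs_mul u \<delta> \<in> I" using dI assms(1) unfolding zs_ideal_def by blast
    moreover have "\<bar>NN (zs_mul u \<delta>)\<bar> = \<bar>NN \<delta>\<bar>" using that by (auto simp: NN_mul)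
    moreover hence "zs_mul u \<delta> \<noteq> zs_zero" using dI NN_zero by (metis abs_0 abs_0_eq)
    ultimately show ?thesis using d1 unfolding P2_def P1_def by auto
  qed
  have m1: "zs_mul (1,1) \<delta> = (a+2*b, a+b)" unfolding ab zs_mul_def by simp
  have m2: "zs_mul (-1,1) \<delta> = (-a+2*b, a-b)" unfolding ab zs_mul_def by simp
  have "EE (a,b) \<le> EE (a+2*b, a+b)" using d2[OF P2u[of "(1,1)"]] m1 ab by (simp add: NN_def)
  moreover have "EE (a,b) \<le> EE (-a+2*b, a-b)" using d2[OF P2u[of "(-1,1)"]] m2 ab by (simp add: NN_def)
  ultimately have bal: "EE \<delta> < 4*\<bar>NN \<delta>\<bar>" using balanced dI ab by simp
  have short: "EE \<delta> \<le> EE \<gamma>" if g: "\<gamma> \<in> I" "\<gamma> \<noteq> zs_zero" for \<gamma>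
  proof -
    obtain r where r: "\<gamma> = zs_mul \<delta> r" using g gen\<delta> unfolding zs_principal_def by blast
    have Ng: "NN \<gamma> = NN \<delta> * NN r" using r NN_mul by simp
    have "NN \<gamma> \<noteq> 0" using g(2) NN_zero by blast
    hence "NN r \<noteq> 0" using Ng by auto
    show ?thesis
    proof (cases "\<bar>NN r\<bar> = 1")
      case True
      hence "\<bar>NN \<gamma>\<bar> = \<bar>NN \<delta>\<bar>" using Ng by (simp add: abs_mult)
      hence "P2 \<gamma>" using g d1 unfolding P2_def P1_def by auto
      thus ?thesis by (rule d2)
    next
      case False
      hence "\<bar>NN r\<bar> \<ge> 2" using \<open>NN r \<noteq> 0\<close> by linarith
      hence "\<bar>NN \<gamma>\<bar> \<ge> \<bar>NN \<delta>\<bar> * 2" using Ng by (simp add: abs_mult mult_left_mono)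
      thus ?thesis using EE_ge[of \<gamma>] bal by linarith
    qed
  qed
  show ?thesis
  proof (intro bexI[of _ \<delta>] conjI ballI impI)
    fix \<gamma> assume "\<gamma> \<in> I" "\<gamma> \<noteq> zs_zero"
    thus "emb_norm \<delta> \<le> emb_norm \<gamma>" using short by (simp add: emb_EE)
  qed (use gen\<delta> dI in auto)
qed
end
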